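(* Let $X$ be a regular Hausdorff space. If $X$ contains a closed subspace homeomorphic to the sequential fan $S_\omega$, then $\mathcal{F}_2(X)$ contains a closed subspace homeomorphic to the Arens space $S_2$.
   Context: $\mathcal{F}_2(X)$ is the set of nonempty subsets of $X$ of cardinality at most 2, with the Vietoris topology (base: $\langle U_1,\dots,U_k\rangle=\{A: A\subset\bigcup_i U_i,\ A\cap U_j\neq\emptyset\ \forall j\}$, $U_i$ open in $X$). The sequential fan $S_\omega$ is obtained from the topological sum of countably many convergent sequences $T_n\cup\{x_n\}$ ($T_n$ a sequence converging to $x_n$), $n\in\omega$, by identifying all limit points $x_n$ to a single point. The Arens space $S_2$ is the set $\{\infty\}\cup\{x_n:n\in\mathbb{N}\}\cup\{x_{n,m}: n,m\}$ where each $x_{n,m}$ is isolated, basic neighborhoods of $x_n$ are $\{x_n\}\cup\{x_{n,m}: m>k\}$, and basic neighborhoods of $\infty$ are $\{\infty\}\cup\bigcup_{n>k}V_n$ with $V_n$ a neighborhood of $x_n$. *)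

theory Defs
  imports "HOL-Analysis.Analysis"
begin

definition F2_set :: "'a topology \<Rightarrow> 'a set set" where
  "F2_set X = {A. A \<noteq> {} \<and> A \<subseteq> topspace X \<and> finite A \<and> card A \<le> 2}"

definition vietoris_box :: "'a topology \<Rightarrow> 'a set list \<Rightarrow> 'a set set" where
  "vietoris_box X Us = {A \<in> F2_set X. A \<subseteq> \<Union>(set Us) \<and> (\<forall>U \<in> set Us. A \<inter> U \<noteq> {})}"

definition F2_topology :: "'a topology \<Rightarrow> 'a set topology" where
  "F2_topology X = topology_generated_by
     {vietoris_box X Us | Us. \<forall>U \<in> set Us. openin X U}"

text \<open>Vertex is the identified limit point; FPt n m is the m-th term of the n-th sequence.\<close>
datatype fan_pt = Vertex | FPt nat nat

definition seq_fan :: "fan_pt topology" where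
  "seq_fan = topology_generated_by
     ({{FPt n m} | n m. True} \<union>
      {insert Vertex {FPt n m | n m. f n \<le> m} | f. True})"

text \<open>AInf is the point infinity, APt n is x_n, APt2 n m is x_{n,m}.\<close>
datatype arens_pt = AInf | APt nat | APt2 nat nat

definition arens_nbhd :: "nat \<Rightarrow> nat \<Rightarrow> arens_pt set" where
  "arens_nbhd n k = insert (APt n) {APt2 n m | m. m > k}"

definition arens_space :: "arens_pt topology" where
  "arens_space = topology_generated_by
     ({{APt2 n m} | n m. True} \<union>
      {arens_nbhd n k | n k. True} \<union>
      {insert AInf (\<Union>n \<in> {n. n > k}. arens_nbhd n (g n)) | k g. True})"

end

theory Submission
  imports Defs
begin

definition fnb :: "(nat \<Rightarrow> nat) \<Rightarrow> fan_pt set" where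
  "fnb f = insert Vertex {FPt n m | n m. f n \<le> m}"

lemma fnb_sub: "fnb f \<subseteq> V \<Longrightarrow> f n \<le> m \<Longrightarrow> FPt n m \<in> V"
  "fnb f \<subseteq> V \<Longrightarrow> Vertex \<in> V"
  unfolding fnb_def by blast+

lemma fan_open_fnb: "openin seq_fan (fnb f)"
  unfolding seq_fan_def fnb_def by (rule topology_generated_by_Basis) blast

lemma fan_open_single: "openin seq_fan {FPt n m}"
  unfolding seq_fan_def by (rule topology_generated_by_Basis) blast

lemma fan_topspace: "topspace seq_fan = UNIV"
proof -
  have "x \<in> topspace seq_fan" for x
  proof (cases x)
    case Vertex
    then show ?thesis using fan_open_fnb[of "\<lambda>_. 0"] openin_subset unfolding fnb_def by blast
  next
    case (FPt n m)
    then show ?thesis using fan_open_single[of n m] openin_subset by blast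
  qed
  then show ?thesis by blast
qed

lemma fan_open_vertex:
  assumes "openin seq_fan W" "Vertex \<in> W"
  shows "\<exists>f. fnb f \<subseteq> W"
proof -
  have "generate_topology_on ({{FPt n m} | n m. True} \<union>
      {insert Vertex {FPt n m | n m. f n \<le> m} | f. True}) W"
    using assms(1) unfolding seq_fan_def by (rule openin_topology_generated_by)
  then have "Vertex \<in> W \<longrightarrow> (\<exists>f. fnb f \<subseteq> W)"
  proof (induction)
    case Empty
    then show ?case by simp
  next
    case (Int a b)
    show ?case
    proof
      assume "Vertex \<in> a \<inter> b"
      then obtain f g where "fnb f \<subseteq> a" "fnb g \<subseteq> b" using Int by blast
      moreover have "fnb (\<lambda>i. max (f i) (g i)) \<subseteq> fnb f \<inter> fnb g"
        unfolding fnb_def by auto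
      ultimately show "\<exists>f. fnb f \<subseteq> a \<inter> b" by blast
    qed
  next
    case (UN K)
    then show ?case by blast
  next
    case (Basis s)
    then show ?case unfolding fnb_def by blast
  qed
  then show ?thesis using assms(2) by blast
qed

definition abasis :: "arens_pt set set" where
  "abasis = ({{APt2 n m} | n m. True} \<union>
      {arens_nbhd n k | n k. True} \<union>
      {insert AInf (\<Union>n \<in> {n. n > k}. arens_nbhd n (g n)) | k g. True})"

lemma arens_open_crit:
  assumes "\<forall>n. APt n \<in> V \<longrightarrow> (\<exists>k. \<forall>m>k. APt2 n m \<in> V)"
    and "AInf \<in> V \<longrightarrow> (\<exists>k g. \<forall>n>k. APt n \<in> V \<and> (\<forall>m>g n. APt2 n m \<in> V))"
  shows "openin arens_space V"
proof -
  have "V = \<Union>{B \<in> abasis. B \<subseteq> V}"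
  proof
    show "V \<subseteq> \<Union>{B \<in> abasis. B \<subseteq> V}"
    proof
      fix x assume x: "x \<in> V"
      show "x \<in> \<Union>{B \<in> abasis. B \<subseteq> V}"
      proof (cases x)
        case AInf
        then obtain k g where kg: "\<forall>n>k. APt n \<in> V \<and> (\<forall>m>g n. APt2 n m \<in> V)"
          using assms(2) x by blast
        let ?B = "insert AInf (\<Union>n \<in> {n. n > k}. arens_nbhd n (g n))"
        have "?B \<in> abasis" unfolding abasis_def by blast
        moreover have "?B \<subseteq> V" using kg x AInf unfolding arens_nbhd_def by auto
        ultimately show ?thesis using AInf by blast
      next
        case (APt n)
        then obtain k where k: "\<forall>m>k. APt2 n m \<in> V" using assms(1) x by blast
        have "arens_nbhd n k \<in> abasis" unfolding abasis_def by blast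
        moreover have "arens_nbhd n k \<subseteq> V" using k x APt unfolding arens_nbhd_def by auto
        moreover have "x \<in> arens_nbhd n k" using APt unfolding arens_nbhd_def by auto
        ultimately show ?thesis by blast
      next
        case (APt2 n m)
        have "{APt2 n m} \<in> abasis" unfolding abasis_def by blast
        then show ?thesis using x APt2 by blast
      qed
    qed
  qed blast
  moreover have "openin arens_space (\<Union>{B \<in> abasis. B \<subseteq> V})"
  proof (rule openin_Union)
    have ab: "arens_space = topology_generated_by abasis" unfolding arens_space_def abasis_def ..
    show "\<And>S. S \<in> {B \<in> abasis. B \<subseteq> V} \<Longrightarrow> openin arens_space S"
      unfolding ab by (auto intro: topology_generated_by_Basis)
  qed
  ultimately show ?thesis by simp
qed

lemma arens_topspace: "topspace arens_space = UNIV"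
proof -
  have "openin arens_space UNIV"
    by (rule arens_open_crit) auto
  then show ?thesis using openin_subset by blast
qed

fun ep :: "arens_pt \<Rightarrow> fan_pt set" where
  "ep AInf = {Vertex}"
| "ep (APt n) = {Vertex, FPt 0 n}"
| "ep (APt2 n m) = {FPt 0 n, FPt (Suc n) m}"

lemma ep_inj: "inj ep"
proof (rule injI)
  fix a b assume "ep a = ep b"
  then show "a = b"
    by (cases a; cases b) (auto simp: doubleton_eq_iff)
qed

lemma ep_props: "ep a \<noteq> {}" "finite (ep a)" "card (ep a) \<le> 2"
  by (cases a; simp add: card_insert_if)+

definition fanbox :: "fan_pt set list \<Rightarrow> fan_pt set \<Rightarrow> bool" where
  "fanbox Vs B \<longleftrightarrow> B \<subseteq> \<Union>(set Vs) \<and> (\<forall>V\<in>set Vs. B \<inter> V \<noteq> {})"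

lemma L1:
  assumes "openin seq_fan W"
  shows "openin arens_space {a. ep a \<subseteq> W}"
proof (rule arens_open_crit)
  show "\<forall>n. APt n \<in> {a. ep a \<subseteq> W} \<longrightarrow> (\<exists>k. \<forall>m>k. APt2 n m \<in> {a. ep a \<subseteq> W})"
  proof (intro allI impI)
    fix n assume "APt n \<in> {a. ep a \<subseteq> W}"
    then have "Vertex \<in> W" "FPt 0 n \<in> W" by auto
    then obtain f where "fnb f \<subseteq> W" using fan_open_vertex assms by blast
    then have "FPt (Suc n) m \<in> W" if "m > f (Suc n)" for m
      using fnb_sub(1)[of f W "Suc n" m] that by simp
    then have "\<forall>m>f (Suc n). APt2 n m \<in> {a. ep a \<subseteq> W}"
      using \<open>FPt 0 n \<in> W\<close> by simp
    then show "\<exists>k. \<forall>m>k. APt2 n m \<in> {a. ep a \<subseteq> W}" by blast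
  qed
  show "AInf \<in> {a. ep a \<subseteq> W} \<longrightarrow> (\<exists>k g. \<forall>n>k. APt n \<in> {a. ep a \<subseteq> W} \<and> (\<forall>m>g n. APt2 n m \<in> {a. ep a \<subseteq> W}))"
  proof
    assume "AInf \<in> {a. ep a \<subseteq> W}"
    then have "Vertex \<in> W" by auto
    then obtain f where f: "fnb f \<subseteq> W" using fan_open_vertex assms by blast
    have a: "FPt i m \<in> W" if "m \<ge> f i" for i m
      using fnb_sub(1)[OF f] that by simp
    have "\<forall>n>f 0. APt n \<in> {a. ep a \<subseteq> W} \<and> (\<forall>m>f (Suc n). APt2 n m \<in> {a. ep a \<subseteq> W})"
      using a \<open>Vertex \<in> W\<close> by simp
    then show "\<exists>k g. \<forall>n>k. APt n \<in> {a. ep a \<subseteq> W} \<and> (\<forall>m>g n. APt2 n m \<in> {a. ep a \<subseteq> W})"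
      by (intro exI[of _ "f 0"] exI[of _ "\<lambda>n. f (Suc n)"])
  qed
qed

lemma L2:
  assumes "openin seq_fan V"
  shows "openin arens_space {a. ep a \<inter> V \<noteq> {}}"
proof (rule arens_open_crit)
  show "\<forall>n. APt n \<in> {a. ep a \<inter> V \<noteq> {}} \<longrightarrow> (\<exists>k. \<forall>m>k. APt2 n m \<in> {a. ep a \<inter> V \<noteq> {}})"
  proof (intro allI impI)
    fix n assume "APt n \<in> {a. ep a \<inter> V \<noteq> {}}"
    then have "Vertex \<in> V \<or> FPt 0 n \<in> V" by auto
    then show "\<exists>k. \<forall>m>k. APt2 n m \<in> {a. ep a \<inter> V \<noteq> {}}"
    proof
      assume "Vertex \<in> V"
      then obtain f where "fnb f \<subseteq> V" using fan_open_vertex assms by blast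
      then have "FPt (Suc n) m \<in> V" if "m > f (Suc n)" for m
        using fnb_sub(1)[of f V "Suc n" m] that by simp
      then have "\<forall>m>f (Suc n). APt2 n m \<in> {a. ep a \<inter> V \<noteq> {}}"
        by auto
      then show ?thesis by blast
    next
      assume "FPt 0 n \<in> V"
      then show ?thesis by auto
    qed
  qed
  show "AInf \<in> {a. ep a \<inter> V \<noteq> {}} \<longrightarrow> (\<exists>k g. \<forall>n>k. APt n \<in> {a. ep a \<inter> V \<noteq> {}} \<and> (\<forall>m>g n. APt2 n m \<in> {a. ep a \<inter> V \<noteq> {}}))"
  proof
    assume "AInf \<in> {a. ep a \<inter> V \<noteq> {}}"
    then have "Vertex \<in> V" by auto
    then obtain f where f: "fnb f \<subseteq> V" using fan_open_vertex assms by blast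
    have a: "FPt i m \<in> V" if "m \<ge> f i" for i m
      using fnb_sub(1)[OF f] that by simp
    have "\<forall>n>f 0. APt n \<in> {a. ep a \<inter> V \<noteq> {}} \<and> (\<forall>m>0. APt2 n m \<in> {a. ep a \<inter> V \<noteq> {}})"
      using a \<open>Vertex \<in> V\<close> by auto
    then show "\<exists>k g. \<forall>n>k. APt n \<in> {a. ep a \<inter> V \<noteq> {}} \<and> (\<forall>m>g n. APt2 n m \<in> {a. ep a \<inter> V \<noteq> {}})"
      by (intro exI[of _ "f 0"] exI[of _ "\<lambda>n. 0"])
  qed
qed

lemma L3:
  assumes "\<forall>V\<in>set Vs. openin seq_fan V" "openin seq_fan W"
  shows "openin arens_space {a. ep a \<subseteq> W \<and> (\<forall>V\<in>set Vs. ep a \<inter> V \<noteq> {})}"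
  using assms(1)
proof (induction Vs)
  case Nil
  then show ?case using L1[OF assms(2)] by simp
next
  case (Cons V Vs)
  have "{a. ep a \<subseteq> W \<and> (\<forall>V'\<in>set (V # Vs). ep a \<inter> V' \<noteq> {})} =
        {a. ep a \<subseteq> W \<and> (\<forall>V'\<in>set Vs. ep a \<inter> V' \<noteq> {})} \<inter> {a. ep a \<inter> V \<noteq> {}}"
    by auto
  then show ?case using Cons L2[of V] by (simp add: openin_Int)
qed

lemma fanbox_open:
  assumes "\<forall>V\<in>set Vs. openin seq_fan V"
  shows "openin arens_space {a. fanbox Vs (ep a)}"
  unfolding fanbox_def using L3[OF assms openin_Union[of "set Vs"]] assms by auto

lemma fan_sep:
  assumes "B \<noteq> {}" "finite B" "card B \<le> 2" "B \<notin> range ep"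
  shows "\<exists>Vs. (\<forall>V\<in>set Vs. openin seq_fan V) \<and> fanbox Vs B \<and> (\<forall>a. \<not> fanbox Vs (ep a))"
proof (cases "Vertex \<in> B")
  case False
  obtain xs where xs: "set xs = B" using finite_list assms(2) by blast
  let ?Vs = "map (\<lambda>x. {x}) xs"
  have op: "\<forall>V\<in>set ?Vs. openin seq_fan V"
  proof
    fix V assume "V \<in> set ?Vs"
    then obtain x where "x \<in> B" "V = {x}" using xs by auto
    then obtain n m where "V = {FPt n m}" using False by (cases x) auto
    then show "openin seq_fan V" using fan_open_single by simp
  qed
  have eq: "fanbox ?Vs C \<longleftrightarrow> C = B" for C
    unfolding fanbox_def using xs by auto
  show ?thesis using op eq assms(4) by (metis rangeI)
next
  case True
  have V: "Vertex \<in> B" using True .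
  have "card (B - {Vertex}) \<le> Suc 0" using assms(2,3) V by (simp add: card_Diff_singleton)
  hence sub: "\<forall>x\<in>B-{Vertex}. \<forall>y\<in>B-{Vertex}. x = y"
    using card_le_Suc0_iff_eq[of "B - {Vertex}"] assms(2) by simp
  show ?thesis
  proof (cases "B - {Vertex} = {}")
    case True
    then have "B = ep AInf" using V by auto
    then show ?thesis using assms(4) by blast
  next
    case False
    then obtain y where y: "y \<in> B" "y \<noteq> Vertex" by blast
    then have B: "B = {Vertex, y}" using sub V by blast
    obtain i j where yij: "y = FPt i j" using y(2) by (cases y) auto
    show ?thesis
    proof (cases i)
      case 0
      then have "B = ep (APt j)" using B yij by simp
      then show ?thesis using assms(4) by blast
    next
      case (Suc a)
      let ?Vs = "[fnb (\<lambda>_. Suc a), {FPt (Suc a) j}]"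
      have op: "\<forall>V\<in>set ?Vs. openin seq_fan V" using fan_open_fnb fan_open_single by simp
      have "fanbox ?Vs B" unfolding fanbox_def fnb_def B yij Suc by auto
      moreover have "\<not> fanbox ?Vs (ep c)" for c
        by (cases c) (auto simp: fanbox_def fnb_def Suc)
      ultimately show ?thesis using op by blast
    qed
  qed
qed

lemma arens_gen: "arens_space = topology_generated_by abasis"
  unfolding arens_space_def abasis_def ..

lemma abasis_fanbox:
  assumes "s \<in> abasis"
  shows "\<exists>Vs. (\<forall>V\<in>set Vs. openin seq_fan V) \<and> s = {a. fanbox Vs (ep a)}"
proof -
  consider (a) n m where "s = {APt2 n m}" | (b) n k where "s = arens_nbhd n k"
    | (c) k g where "s = insert AInf (\<Union>n \<in> {n. n > k}. arens_nbhd n (g n))"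
    using assms unfolding abasis_def by blast
  then show ?thesis
  proof cases
    case a
    let ?Vs = "[{FPt 0 n}, {FPt (Suc n) m}]"
    have "fanbox ?Vs (ep c) \<longleftrightarrow> c \<in> s" for c
      unfolding a by (cases c) (auto simp: fanbox_def)
    moreover have "\<forall>V\<in>set ?Vs. openin seq_fan V" using fan_open_single by simp
    ultimately show ?thesis by blast
  next
    case b
    let ?Vs = "[fnb (\<lambda>_. Suc k), {FPt 0 n}]"
    have "fanbox ?Vs (ep c) \<longleftrightarrow> c \<in> s" for c
      unfolding b by (cases c) (auto simp: fanbox_def fnb_def arens_nbhd_def)
    moreover have "\<forall>V\<in>set ?Vs. openin seq_fan V" using fan_open_single fan_open_fnb by simp
    ultimately show ?thesis by blast
  next
    case c
    let ?Vs = "[fnb (case_nat (Suc k) (\<lambda>j. Suc (g j)))]"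
    have "fanbox ?Vs (ep x) \<longleftrightarrow> x \<in> s" for x
      unfolding c by (cases x) (auto simp: fanbox_def fnb_def arens_nbhd_def)
    moreover have "\<forall>V\<in>set ?Vs. openin seq_fan V" using fan_open_fnb by simp
    ultimately show ?thesis by blast
  qed
qed

theorem proposition3p8:
  fixes X :: "'a topology"
  assumes "regular_space X" and "Hausdorff_space X"
    and "\<exists>S. closedin X S \<and> subtopology X S homeomorphic_space seq_fan"
  shows "\<exists>T. closedin (F2_topology X) T \<and>
             subtopology (F2_topology X) T homeomorphic_space arens_space"
proof -
  obtain S where S: "closedin X S" "subtopology X S homeomorphic_space seq_fan" using assms(3) by blast
  obtain h k where hk: "homeomorphic_maps seq_fan (subtopology X S) h k"
    using S(2) homeomorphic_space_sym unfolding homeomorphic_space_def by metis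
  have SX: "S \<subseteq> topspace X" using S(1) closedin_subset by blast
  have tsS: "topspace (subtopology X S) = S" using SX by auto
  have hmap: "homeomorphic_map seq_fan (subtopology X S) h" using hk homeomorphic_map_maps by blast
  have hcS: "continuous_map seq_fan (subtopology X S) h" using hk unfolding homeomorphic_maps_def by blast
  have hS: "h x \<in> S" for x using hcS tsS fan_topspace unfolding continuous_map_def by auto
  have kh: "k (h x) = x" for x using hk fan_topspace unfolding homeomorphic_maps_def by auto
  have injh: "inj h" by (metis injI kh)
  have hk2: "y \<in> S \<Longrightarrow> h (k y) = y" for y using hk tsS unfolding homeomorphic_maps_def by auto
  have rng: "range h = S" using hS hk2 by (metis image_subsetI rangeI subsetI subset_antisym)
  have hcX: "continuous_map seq_fan X h" using hcS continuous_map_in_subtopology by blast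
  have pre: "openin seq_fan (h -` U)" if "openin X U" for U
    using openin_continuous_map_preimage[OF hcX that] fan_topspace by (simp add: vimage_def)
  have lift: "\<exists>U. openin X U \<and> h ` V = U \<inter> S" if "openin seq_fan V" for V
  proof -
    have "openin (subtopology X S) (h ` V)"
      using homeomorphic_map_openness[OF hmap] that fan_topspace by auto
    then show ?thesis unfolding openin_subtopology by blast
  qed
  define L where "L V = (SOME U. openin X U \<and> h ` V = U \<inter> S)" for V
  have L: "openin X (L V) \<and> h ` V = L V \<inter> S" if "openin seq_fan V" for V
    unfolding L_def using someI_ex[OF lift[OF that]] .
  have hL: "h x \<in> L V \<longleftrightarrow> x \<in> V" if "openin seq_fan V" for V x
  proof
    assume "h x \<in> L V"
    then have "h x \<in> h ` V" using L[OF that] hS by auto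
    then show "x \<in> V" using injh by (auto dest: injD)
  next
    assume "x \<in> V" then show "h x \<in> L V" using L[OF that] by auto
  qed
  define e where "e a = h ` ep a" for a
  define T where "T = range e"
  have eF2: "e a \<in> F2_set X" for a
  proof -
    have "card (e a) \<le> 2" unfolding e_def using card_image_le[OF ep_props(2), of h a] ep_props(3)[of a] by linarith
    then show ?thesis unfolding F2_set_def e_def using ep_props(1,2)[of a] hS SX by auto
  qed
  have inje: "inj e"
  proof (rule injI)
    fix a b assume "e a = e b"
    then have "ep a = ep b" unfolding e_def using injh by (simp add: inj_image_eq_iff)
    then show "a = b" using ep_inj by (simp add: inj_eq)
  qed
  have TF: "T \<subseteq> F2_set X" unfolding T_def using eF2 by auto
  have box_open: "openin (F2_topology X) (vietoris_box X Us)" if "\<forall>U\<in>set Us. openin X U" for Us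
    unfolding F2_topology_def by (rule topology_generated_by_Basis) (use that in blast)
  have ts: "topspace (F2_topology X) = F2_set X"
  proof
    show "topspace (F2_topology X) \<subseteq> F2_set X"
      unfolding F2_topology_def topology_generated_by_topspace vietoris_box_def by blast
    show "F2_set X \<subseteq> topspace (F2_topology X)"
    proof
      fix A assume A: "A \<in> F2_set X"
      then have "A \<in> vietoris_box X [topspace X]" unfolding vietoris_box_def F2_set_def by auto
      then show "A \<in> topspace (F2_topology X)"
        using box_open[of "[topspace X]"] openin_subset by auto
    qed
  qed
  have trans1: "h ` B \<in> vietoris_box X (map L Vs) \<longleftrightarrow> fanbox Vs B"
    if op: "\<forall>V\<in>set Vs. openin seq_fan V" and inF: "h ` B \<in> F2_set X" for Vs B
  proof -
    have 1: "h ` B \<subseteq> \<Union>(set (map L Vs)) \<longleftrightarrow> B \<subseteq> \<Union>(set Vs)"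
    proof
      assume H: "h ` B \<subseteq> \<Union>(set (map L Vs))"
      show "B \<subseteq> \<Union>(set Vs)"
      proof
        fix x assume "x \<in> B"
        then obtain V where V: "V \<in> set Vs" "h x \<in> L V" using H by auto
        then have "x \<in> V" using hL[of V x] op by blast
        then show "x \<in> \<Union>(set Vs)" using V by blast
      qed
    next
      assume H: "B \<subseteq> \<Union>(set Vs)"
      show "h ` B \<subseteq> \<Union>(set (map L Vs))"
      proof
        fix y assume "y \<in> h ` B"
        then obtain x where x: "x \<in> B" "y = h x" by blast
        then obtain V where V: "V \<in> set Vs" "x \<in> V" using H by blast
        then have "h x \<in> L V" using hL[of V x] op by blast
        then show "y \<in> \<Union>(set (map L Vs))" using V x by auto
      qed
    qed
    have 2: "h ` B \<inter> L V \<noteq> {} \<longleftrightarrow> B \<inter> V \<noteq> {}" if V: "V \<in> set Vs" for V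
    proof -
      have o: "openin seq_fan V" using V op by blast
      show ?thesis using hL[OF o] by blast
    qed
    have 3: "(\<forall>U\<in>set (map L Vs). h ` B \<inter> U \<noteq> {}) \<longleftrightarrow> (\<forall>V\<in>set Vs. B \<inter> V \<noteq> {})"
      using 2 by auto
    show ?thesis unfolding vietoris_box_def fanbox_def using 1 3 inF by auto
  qed
  have trans2: "e a \<in> vietoris_box X Us \<longleftrightarrow> fanbox (map (\<lambda>U. h -` U) Us) (ep a)" for a Us
  proof -
    have 1: "h ` C \<subseteq> \<Union>(set Us) \<longleftrightarrow> C \<subseteq> \<Union>(set (map (\<lambda>U. h -` U) Us))" for C
      by (auto simp: image_subset_iff)
    have 2: "(\<forall>U\<in>set Us. h ` C \<inter> U \<noteq> {}) \<longleftrightarrow> (\<forall>V\<in>set (map (\<lambda>U. h -` U) Us). C \<inter> V \<noteq> {})" for C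
      by auto
    show ?thesis unfolding vietoris_box_def fanbox_def e_def using eF2[of a] 1 2 unfolding e_def by auto
  qed
  have closed: "closedin (F2_topology X) T"
    unfolding closedin_def ts
  proof (intro conjI TF openin_subopen[THEN iffD2] ballI)
    fix A assume A: "A \<in> F2_set X - T"
    show "\<exists>W. openin (F2_topology X) W \<and> A \<in> W \<and> W \<subseteq> F2_set X - T"
    proof (cases "A \<subseteq> S")
      case False
      let ?W = "vietoris_box X [topspace X, topspace X - S]"
      have "openin (F2_topology X) ?W" using box_open S(1) unfolding closedin_def by auto
      moreover have "A \<in> ?W" using A False unfolding vietoris_box_def F2_set_def by auto
      moreover have "?W \<subseteq> F2_set X - T"
      proof
        fix C assume C: "C \<in> ?W"
        have "C \<notin> T"
        proof
          assume "C \<in> T"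
          then have "C \<subseteq> S" unfolding T_def e_def using hS by auto
          then show False using C unfolding vietoris_box_def by auto
        qed
        then show "C \<in> F2_set X - T" using C unfolding vietoris_box_def by auto
      qed
      ultimately show ?thesis by blast
    next
      case True
      define B where "B = h -` A"
      have hB: "h ` B = A" unfolding B_def using True rng by auto
      have finA: "finite A" "A \<noteq> {}" "card A \<le> 2" using A unfolding F2_set_def by auto
      have finB: "finite B" unfolding B_def using finA(1) injh by (simp add: finite_vimageI)
      have cB: "card B \<le> 2" using finA(3) hB card_image[of h B] injh by (metis inj_on_subset subset_UNIV)
      have neB: "B \<noteq> {}" using hB finA(2) by auto
      have nrB: "B \<notin> range ep"
      proof
        assume "B \<in> range ep"
        then obtain a where "B = ep a" by blast
        then have "A = e a" using hB unfolding e_def by simp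
        then show False using A unfolding T_def by auto
      qed
      obtain Vs where Vs: "\<forall>V\<in>set Vs. openin seq_fan V" "fanbox Vs B" "\<forall>a. \<not> fanbox Vs (ep a)"
        using fan_sep[OF neB finB cB nrB] by blast
      let ?W = "vietoris_box X (map L Vs)"
      have "openin (F2_topology X) ?W" using box_open L Vs(1) by auto
      moreover have "A \<in> ?W" using trans1[OF Vs(1), of B] hB A Vs(2) by auto
      moreover have "?W \<subseteq> F2_set X - T"
      proof
        fix C assume C: "C \<in> ?W"
        have "C \<notin> T"
        proof
          assume "C \<in> T"
          then obtain a where "C = e a" unfolding T_def by blast
          then have "e a \<in> ?W" using C by simp
          then have "fanbox Vs (ep a)" using trans1[OF Vs(1), of "ep a"] eF2[of a] unfolding e_def by simp
          then show False using Vs(3) by blast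
        qed
        then show "C \<in> F2_set X - T" using C unfolding vietoris_box_def by auto
      qed
      ultimately show ?thesis by blast
    qed
  qed
  have hom: "homeomorphic_map arens_space (subtopology (F2_topology X) T) e"
  proof (rule bijective_open_imp_homeomorphic_map)
    have "continuous_map arens_space (F2_topology X) e"
      unfolding F2_topology_def
    proof (rule continuous_on_generated_topo)
      fix U assume "U \<in> {vietoris_box X Us | Us. \<forall>U \<in> set Us. openin X U}"
      then obtain Us where U: "U = vietoris_box X Us" "\<forall>U \<in> set Us. openin X U" by blast
      have "e -` U \<inter> topspace arens_space = {a. fanbox (map (\<lambda>U. h -` U) Us) (ep a)}"
        using trans2 U(1) arens_topspace by auto
      moreover have "openin arens_space {a. fanbox (map (\<lambda>U. h -` U) Us) (ep a)}"
        using fanbox_open pre U(2) by auto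
      ultimately show "openin arens_space (e -` U \<inter> topspace arens_space)" by simp
    next
      have "e a \<in> vietoris_box X [topspace X]" for a
        using eF2[of a] unfolding vietoris_box_def F2_set_def by auto
      moreover have "vietoris_box X [topspace X] \<in> {vietoris_box X Us | Us. \<forall>U \<in> set Us. openin X U}"
        by auto
      ultimately show "e ` topspace arens_space \<subseteq> \<Union>{vietoris_box X Us | Us. \<forall>U \<in> set Us. openin X U}"
        by blast
    qed
    then show "continuous_map arens_space (subtopology (F2_topology X) T) e"
      using continuous_map_in_subtopology T_def by blast
    show "open_map arens_space (subtopology (F2_topology X) T) e"
      unfolding open_map_def
    proof (intro allI impI)
      fix U assume "openin arens_space U"
      then have "generate_topology_on abasis U" unfolding arens_gen by (rule openin_topology_generated_by)
      then show "openin (subtopology (F2_topology X) T) (e ` U)"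
      proof induction
        case Empty
        then show ?case by simp
      next
        case (Int a b)
        then show ?case by (simp add: image_Int[OF inje] openin_Int)
      next
        case (UN K)
        then show ?case unfolding image_Union by (intro openin_Union) auto
      next
        case (Basis s)
        obtain Vs where Vs: "\<forall>V\<in>set Vs. openin seq_fan V" "s = {a. fanbox Vs (ep a)}"
          using abasis_fanbox[OF Basis] by blast
        have ee: "e a \<in> vietoris_box X (map L Vs) \<longleftrightarrow> a \<in> s" for a
          using trans1[OF Vs(1), of "ep a"] eF2[of a] Vs(2) unfolding e_def by simp
        have "e ` s = vietoris_box X (map L Vs) \<inter> T"
          unfolding T_def using ee by auto
        moreover have "openin (F2_topology X) (vietoris_box X (map L Vs))"
          using box_open L Vs(1) by auto
        ultimately show ?case by (simp add: openin_subtopology_Int)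
      qed
    qed
    have tT: "topspace (subtopology (F2_topology X) T) = T" unfolding topspace_subtopology ts using TF by blast
    show "e ` topspace arens_space = topspace (subtopology (F2_topology X) T)"
      unfolding tT by (simp add: arens_topspace T_def)
    show "inj_on e (topspace arens_space)" using inj_on_subset[OF inje subset_UNIV] .
  qed
  then have "arens_space homeomorphic_space subtopology (F2_topology X) T"
    by (rule homeomorphic_map_imp_homeomorphic_space)
  then have "subtopology (F2_topology X) T homeomorphic_space arens_space"
    by (subst homeomorphic_space_sym)
  then show ?thesis using closed by blast
qed

end
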